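(* (a) Let $p=\prod_{i\in I}\Phi_{m_i}$ be a product of cyclotomic polynomials. Then $p(1)\equiv1\pmod2$ if and only if all $m_i\in\mathbb Z_{\ge1}-\{2^k\mid k\in\mathbb Z_{\ge0}\}$. (b) Let $\Lambda$ be a $\mathbb Z$-lattice with an automorphism $M_h$ of finite order, and let $\Lambda^{(1)}\subset\Lambda$ be an $M_h$-invariant sublattice with $[\Lambda:\Lambda^{(1)}]=2$. Write the characteristic polynomial $p_\Lambda=p_1p_2$ with $p_j=\prod_{m\in J_j}\Phi_m$, where $J_1\subset\mathbb Z_{\ge1}-\{2^k\mid k\in\mathbb Z_{\ge0}\}$ and $J_2\subset\{2^k\mid k\in\mathbb Z_{\ge0}\}$. Then $J_2\ne\emptyset$, $p_2\ne1$, $\Lambda_p=\Lambda^{(1)}_p$ for every $p$ with $p\mid p_1$, and $[\Lambda_p:\Lambda^{(1)}_p]=2$ for every $p$ with $p_2\mid p$ (here $p$ ranges over products of cyclotomic polynomials dividing $p_\Lambda$).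
   Context: $\Phi_n$ is the $n$-th cyclotomic polynomial. For an $M_h$-invariant sublattice $B$ and a product $p$ of cyclotomic polynomials dividing the characteristic polynomial of $M_h$ on $B$, $B_p:=(\bigoplus_{\lambda:p(\lambda)=0}B_\lambda)\cap B$, with $B_\lambda=\ker(M_h-\lambda)\subset B\otimes\mathbb C$. *)

theory Defs
  imports "Jordan_Normal_Form.Char_Poly" "HOL-Library.Multiset"
begin

definition cyclotomic_C :: "nat \<Rightarrow> complex poly" where
  "cyclotomic_C n = (\<Prod>k\<in>{k. k < n \<and> coprime k n}. [: - cis (2 * pi * real k / real n), 1 :])"

definition cyclotomic :: "nat \<Rightarrow> int poly" where
  "cyclotomic n = (THE q. map_poly of_int q = cyclotomic_C n)"

definition is_pow2 :: "nat \<Rightarrow> bool" where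
  "is_pow2 m \<longleftrightarrow> (\<exists>k. m = 2 ^ k)"

definition cyclo_prod :: "nat multiset \<Rightarrow> int poly" where
  "cyclo_prod K = (\<Prod>m\<in>#K. cyclotomic m)"

(* sum of the eigenspaces ker(M - lambda) in C^n over the roots lambda of p *)
definition eig_sum :: "nat \<Rightarrow> complex mat \<Rightarrow> complex poly \<Rightarrow> complex vec set" where
  "eig_sum n M p = {foldr (+) vs (0\<^sub>v n) | vs.
      \<forall>v\<in>set vs. v \<in> carrier_vec n \<and> (\<exists>c. poly p c = 0 \<and> M *\<^sub>v v = c \<cdot>\<^sub>v v)}"

(* B_p := (sum of B_lambda over roots of p) intersected with B, B \<subseteq> Z^n *)
definition lat_part :: "nat \<Rightarrow> int mat \<Rightarrow> int poly \<Rightarrow> int vec set \<Rightarrow> int vec set" where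
  "lat_part n M p B = {v \<in> B. map_vec of_int v \<in> eig_sum n (map_mat of_int M) (map_poly of_int p)}"

definition lat_index :: "int vec set \<Rightarrow> int vec set \<Rightarrow> nat" where
  "lat_index A B = card {{x + y | y. y \<in> B} | x. x \<in> A}"

end

theory Submission
  imports Defs
begin

lemma cis_eq_1_iff: "cis x = 1 \<longleftrightarrow> (\<exists>m::int. x = of_int m * 2 * pi)"
proof
  assume "cis x = 1"
  then have "cos x = 1" by (metis cis.sel(1) one_complex.sel(1))
  then show "\<exists>m::int. x = of_int m * 2 * pi" by (simp add: cos_one_2pi_int)
next
  assume "\<exists>m::int. x = of_int m * 2 * pi"
  then obtain m :: int where "x = of_int m * 2 * pi" by blast
  then have "cos x = 1" by (auto simp: cos_one_2pi_int)
  moreover have "sin x = 0" using \<open>cos x = 1\<close> sin_cos_squared_add[of x] by simp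
  ultimately show "cis x = 1" by (simp add: complex_eq_iff)
qed

lemma cis_root_pow_eq_1:
  assumes "d > 0"
  shows "cis (2*pi*real k/real d) ^ N = 1 \<longleftrightarrow> d dvd k * N"
proof -
  have "cis (2*pi*real k/real d) ^ N = cis (2*pi*real (k*N)/real d)"
    by (simp add: DeMoivre mult_ac)
  also have "\<dots> = 1 \<longleftrightarrow> (\<exists>m::int. 2*pi*real (k*N)/real d = of_int m * 2 * pi)"
    by (rule cis_eq_1_iff)
  also have "\<dots> \<longleftrightarrow> (\<exists>m::int. real (k*N) = of_int m * real d)"
    using assms by (auto simp: field_simps)
  also have "\<dots> \<longleftrightarrow> (\<exists>m::int. int (k*N) = m * int d)"
    by (metis of_int_eq_iff of_int_mult of_int_of_nat_eq)
  also have "\<dots> \<longleftrightarrow> int d dvd int (k*N)" by (auto simp: dvd_def mult_ac)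
  also have "\<dots> \<longleftrightarrow> d dvd k*N" by (metis int_dvd_int_iff of_nat_mult)
  finally show ?thesis .
qed

lemma prim_root_pow_eq_1:
  assumes "d > 0" "coprime k d"
  shows "cis (2*pi*real k/real d) ^ N = 1 \<longleftrightarrow> d dvd N"
  using cis_root_pow_eq_1[OF assms(1)] assms(2)
  by (metis coprime_commute coprime_dvd_mult_right_iff)

definition prims :: "nat \<Rightarrow> complex set" where
  "prims d = (\<lambda>k. cis (2*pi*real k/real d)) ` {k. k<d \<and> coprime k d}"

lemma inj_prims: "inj_on (\<lambda>k. cis (2*pi*real k/real d)) {k. k<d \<and> coprime k d}"
proof (cases "d = 0")
  case False
  then show ?thesis using bij_betw_roots_unity[of d]
    by (auto simp: bij_betw_def inj_on_def)
qed simp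

lemma cyclotomic_C_prims: "cyclotomic_C d = (\<Prod>z\<in>prims d. [:-z,1:])"
  unfolding cyclotomic_C_def prims_def
  by (subst prod.reindex[OF inj_prims]) simp

lemma prims_finite: "finite (prims d)"
  unfolding prims_def by simp

lemma cyclotomic_C_root: "poly (cyclotomic_C d) z = 0 \<longleftrightarrow> z \<in> prims d"
  unfolding cyclotomic_C_prims using prims_finite
  by (simp add: poly_prod prod_zero_iff)

lemma prims_pow: "z \<in> prims d \<Longrightarrow> z ^ N = 1 \<longleftrightarrow> d dvd N"
  unfolding prims_def using prim_root_pow_eq_1 by fastforce



lemma roots_union:
  assumes m: "m > 0"
  shows "(\<Union>d\<in>{d. d dvd m}. prims d) = {z::complex. z^m = 1}"
proof
  show "(\<Union>d\<in>{d. d dvd m}. prims d) \<subseteq> {z. z^m = 1}"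
    using prims_pow by blast
next
  show "{z::complex. z^m = 1} \<subseteq> (\<Union>d\<in>{d. d dvd m}. prims d)"
  proof
    fix z :: complex assume "z \<in> {z. z^m = 1}"
    then have "z \<in> (\<lambda>k. cis (2 * pi * real k / real m)) ` {..<m}"
      using bij_betw_roots_unity[OF m] unfolding bij_betw_def by simp
    then obtain j where j: "j < m" "z = cis (2*pi*real j/real m)" by auto
    define g where "g = gcd j m"
    have g0: "g > 0" using m by (simp add: g_def)
    define d where "d = m div g"
    define k where "k = j div g"
    have md: "m = d * g" unfolding d_def g_def by simp
    have jk: "j = k * g" unfolding k_def g_def by simp
    have cop: "coprime k d" unfolding k_def d_def g_def
      by (rule div_gcd_coprime) (use m in simp)
    have kd: "k < d" using j(1) g0 by (simp add: md jk)
    have "real j / real m = real k / real d"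
      using g0 by (simp add: md jk)
    then have e: "2*pi*real j/real m = 2*pi*real k/real d" by (metis mult.assoc times_divide_eq_right)
    have "z = cis (2*pi*real k/real d)" by (simp only: j(2) e)
    then have "z \<in> prims d" unfolding prims_def using cop kd by blast
    moreover have "d dvd m" using md by simp
    ultimately show "z \<in> (\<Union>d\<in>{d. d dvd m}. prims d)" by blast
  qed
qed

lemma prims_disjoint:
  assumes "d \<noteq> e" shows "prims d \<inter> prims e = {}"
proof (rule ccontr)
  assume "prims d \<inter> prims e \<noteq> {}"
  then obtain z where z: "z \<in> prims d" "z \<in> prims e" by blast
  have "z ^ d = 1" using prims_pow[OF z(1)] by simp
  then have "e dvd d" using prims_pow[OF z(2)] by simp
  moreover have "z ^ e = 1" using prims_pow[OF z(2)] by simp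
  then have "d dvd e" using prims_pow[OF z(1)] by simp
  ultimately show False using assms by (simp add: dvd_antisym)
qed

lemma Xm1_prod:
  assumes m: "m > 0"
  shows "(monom 1 m - 1 :: complex poly) = (\<Prod>z\<in>{z. z^m = 1}. [:-z,1:])"
proof -
  let ?p = "monom 1 m - 1 :: complex poly"
  have rt: "poly ?p z = 0 \<longleftrightarrow> z^m = 1" for z by (simp add: poly_monom)
  have "rsquarefree ?p"
    unfolding rsquarefree_roots
  proof (intro allI notI)
    fix a assume h: "poly ?p a = 0 \<and> poly (pderiv ?p) a = 0"
    then have "of_nat m * a ^ (m - 1) = 0" by (simp add: pderiv_diff pderiv_monom poly_monom)
    then have "a = 0" using m by simp
    then show False using h m by (simp add: poly_monom power_0_left)
  qed
  moreover have "lead_coeff (-1 + monom 1 m :: complex poly) = 1" using m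
    by (subst lead_coeff_add_le) (simp_all add: degree_monom_eq)
  then have "lead_coeff ?p = 1" by (metis diff_conv_add_uminus add.commute)
  ultimately have eq: "?p = (\<Prod>z\<in>{z. poly ?p z = 0}. [:-z,1:])"
    using complex_poly_decompose_rsquarefree[of ?p] by simp
  have S: "{z. poly ?p z = 0} = {z. z^m=1}" by (simp add: poly_monom)
  show ?thesis using eq unfolding S .
qed

lemma cyc_prod:
  assumes m: "m > 0"
  shows "(monom 1 m - 1 :: complex poly) = (\<Prod>d\<in>{d. d dvd m}. cyclotomic_C d)"
proof -
  have fin: "finite {d. d dvd m}" using m by simp
  have "(\<Prod>d\<in>{d. d dvd m}. cyclotomic_C d) = (\<Prod>d\<in>{d. d dvd m}. \<Prod>z\<in>prims d. [:-z,1:])"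
    by (simp add: cyclotomic_C_prims)
  also have "\<dots> = (\<Prod>z\<in>(\<Union>d\<in>{d. d dvd m}. prims d). [:-z,1:])"
    by (rule prod.UNION_disjoint[symmetric]) (use fin prims_finite prims_disjoint in auto)
  also have "\<dots> = monom 1 m - 1" using roots_union[OF m] Xm1_prod[OF m] by simp
  finally show ?thesis by simp
qed



lemma int_div_monic:
  fixes p q :: "int poly" and r :: "complex poly"
  assumes q: "lead_coeff q = 1" and e: "of_int_poly p = of_int_poly q * r"
  shows "\<exists>s. of_int_poly s = r"
proof -
  obtain s t where st: "pseudo_divmod p q = (s,t)" by force
  have q0: "q \<noteq> 0" using q by auto
  from pseudo_divmod[OF q0 st] q have 1: "p = q*s + t" and 2: "t = 0 \<or> degree t < degree q" by auto
  have "of_int_poly p = of_int_poly q * of_int_poly s + (of_int_poly t :: complex poly)"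
    using 1 by (simp add: of_int_poly_hom.hom_add of_int_poly_hom.hom_mult)
  with e have 3: "of_int_poly q * (r - of_int_poly s) = (of_int_poly t :: complex poly)"
    by (simp add: algebra_simps)
  show ?thesis
  proof (cases "r = of_int_poly s")
    case False
    then have nz: "r - of_int_poly s \<noteq> 0" by simp
    have q0': "(of_int_poly q :: complex poly) \<noteq> 0" using q0 by simp
    have "degree (of_int_poly q * (r - of_int_poly s)) = degree q + degree (r - of_int_poly s)"
      using degree_mult_eq[OF q0' nz] by simp
    then have "degree t \<ge> degree q" using 3 by simp
    moreover have "t \<noteq> 0" using 3 q0' nz by auto
    ultimately show ?thesis using 2 by simp
  qed auto
qed

lemma cyclotomic_C_monic: "lead_coeff (cyclotomic_C d) = 1"
  unfolding cyclotomic_C_prims lead_coeff_prod by simp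

lemma cyclotomic_C_0: "cyclotomic_C 0 = 1"
  unfolding cyclotomic_C_def by simp

lemma cyc_int: "\<exists>q. of_int_poly q = cyclotomic_C m"
proof (induction m rule: less_induct)
  case (less m)
  show ?case
  proof (cases "m = 0")
    case True
    then show ?thesis by (intro exI[of _ 1]) (simp add: cyclotomic_C_0)
  next
    case False
    then have m: "m > 0" by simp
    define D' where "D' = {d. d dvd m} - {m}"
    have fin: "finite {d. d dvd m}" using m by simp
    have "(monom 1 m - 1 :: complex poly) = cyclotomic_C m * (\<Prod>d\<in>D'. cyclotomic_C d)"
      unfolding cyc_prod[OF m] D'_def using fin by (subst prod.remove[of _ m]) auto
    moreover have "\<forall>d\<in>D'. \<exists>q. of_int_poly q = cyclotomic_C d"
    proof
      fix d assume "d \<in> D'"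
      then have "d < m" using m unfolding D'_def by (auto dest: dvd_imp_le)
      then show "\<exists>q. of_int_poly q = cyclotomic_C d" by (rule less.IH)
    qed
    then obtain f where f: "\<And>d. d \<in> D' \<Longrightarrow> of_int_poly (f d) = cyclotomic_C d" by metis
    define Q where "Q = (\<Prod>d\<in>D'. f d)"
    have QQ: "(of_int_poly Q :: complex poly) = (\<Prod>d\<in>D'. cyclotomic_C d)"
      unfolding Q_def of_int_poly_hom.hom_prod using f by simp
    have "lead_coeff (of_int_poly Q :: complex poly) = 1"
      unfolding QQ lead_coeff_prod cyclotomic_C_monic by simp
    then have Qm: "lead_coeff Q = 1" by simp
    have "(of_int_poly (monom 1 m - 1 :: int poly) :: complex poly) = monom 1 m - 1"
      by (simp add: of_int_poly_hom.hom_minus)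
    ultimately have "of_int_poly (monom 1 m - 1 :: int poly) = of_int_poly Q * cyclotomic_C m"
      using QQ by (simp add: mult.commute)
    then show ?thesis by (rule int_div_monic[OF Qm])
  qed
qed

lemma cyclotomic_map: "(of_int_poly (cyclotomic m) :: complex poly) = cyclotomic_C m"
proof -
  have "\<exists>!q. (of_int_poly q :: complex poly) = cyclotomic_C m"
  proof (rule ex_ex1I)
    show "\<exists>q. (of_int_poly q :: complex poly) = cyclotomic_C m" by (rule cyc_int)
  next
    fix x y :: "int poly"
    assume "(of_int_poly x :: complex poly) = cyclotomic_C m" "(of_int_poly y :: complex poly) = cyclotomic_C m"
    then show "x = y" by (metis of_int_poly_hom.eq_iff)
  qed
  then show ?thesis unfolding cyclotomic_def by (rule theI')
qed



lemma dvd_pow2_iff: "(d::nat) dvd 2 ^ k \<longleftrightarrow> (\<exists>i\<le>k. d = 2 ^ i)"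
  by (rule divides_primepow_nat) simp

lemma pow2_divisors_Suc: "{d::nat. d dvd 2 ^ Suc i} = insert (2 ^ Suc i) {d. d dvd 2 ^ i}"
proof -
  have "d dvd 2 ^ Suc i \<longleftrightarrow> d = 2 ^ Suc i \<or> d dvd 2 ^ i" for d :: nat
    unfolding dvd_pow2_iff by (auto simp: le_Suc_eq)
  then show ?thesis by auto
qed

lemma cyclotomic_C_1: "cyclotomic_C 1 = [:-1,1:]"
proof -
  have "{k::nat. k < 1 \<and> coprime k 1} = {0}" by auto
  then show ?thesis unfolding cyclotomic_C_def by simp
qed

lemma monom_sq: "(monom (1::complex) a - 1) * (monom 1 a + 1) = monom 1 (a + a) - 1"
  by (simp add: algebra_simps mult_monom)

lemma cyc_pow2_Suc: "cyclotomic_C (2 ^ Suc i) = monom 1 (2 ^ i) + 1"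
proof -
  have nz: "(monom (1::complex) (2^i) - 1) \<noteq> 0"
  proof
    assume "(monom (1::complex) (2^i) - 1) = 0"
    then have "poly (monom (1::complex) (2^i) - 1) 0 = 0" by simp
    then show False by (simp add: poly_monom power_0_left)
  qed
  have "(monom 1 (2 ^ Suc i) - 1 :: complex poly) = (\<Prod>d\<in>{d. d dvd 2 ^ Suc i}. cyclotomic_C d)"
    by (rule cyc_prod) simp
  also have "\<dots> = cyclotomic_C (2 ^ Suc i) * (\<Prod>d\<in>{d. d dvd 2 ^ i}. cyclotomic_C d)"
    unfolding pow2_divisors_Suc by (subst prod.insert) (auto dest: dvd_imp_le)
  also have "(\<Prod>d\<in>{d. d dvd 2 ^ i}. cyclotomic_C d) = monom 1 (2^i) - 1"
    by (rule cyc_prod[symmetric]) simp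
  finally have "(monom 1 (2^i) - 1) * cyclotomic_C (2 ^ Suc i) = (monom 1 (2^i) - 1) * (monom 1 (2^i) + 1)"
    using monom_sq[of "2^i"] by (metis mult_2 power_Suc mult.commute)
  then show ?thesis using nz by simp
qed

definition cval :: "nat \<Rightarrow> int" where "cval m = poly (cyclotomic m) 1"

lemma cval_C: "poly (cyclotomic_C m) 1 = (of_int (cval m) :: complex)"
  unfolding cval_def cyclotomic_map[symmetric] by simp

lemma cval_pow2: "even (cval (2 ^ k))"
proof (cases k)
  case 0
  have "(of_int (cval 1) :: complex) = 0" unfolding cval_C[symmetric] cyclotomic_C_1 by simp
  then show ?thesis using 0 by simp
next
  case (Suc i)
  have "(of_int (cval (2^k)) :: complex) = 2" unfolding cval_C[symmetric] Suc cyc_pow2_Suc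
    by (simp add: poly_monom)
  then have "cval (2^k) = 2" by (metis of_int_eq_numeral_iff)
  then show ?thesis by simp
qed

lemma pow2_odd_decomp: "(m::nat) > 0 \<Longrightarrow> \<exists>a r. m = 2^a * r \<and> odd r"
proof (induction m rule: less_induct)
  case (less m)
  show ?case
  proof (cases "odd m")
    case True
    then show ?thesis by (intro exI[of _ 0] exI[of _ m]) simp
  next
    case False
    then obtain m' where m': "m = 2 * m'" by (auto elim: evenE)
    with less.prems have "m' < m" "m' > 0" by auto
    from less.IH[OF this] obtain a r where "m' = 2^a * r" "odd r" by blast
    then show ?thesis using m' by (intro exI[of _ "Suc a"] exI[of _ r]) simp
  qed
qed

lemma geom_monom: "(monom (1::complex) s - 1) * (\<Sum>i<r. monom 1 (s*i)) = monom 1 (s*r) - 1"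
proof (induction r)
  case (Suc r)
  have "(monom (1::complex) s - 1) * (\<Sum>i<Suc r. monom 1 (s*i))
      = (monom 1 s - 1) * (\<Sum>i<r. monom 1 (s*i)) + (monom 1 s - 1) * monom 1 (s*r)"
    by (simp add: algebra_simps)
  also have "\<dots> = monom 1 (s*Suc r) - 1"
    unfolding Suc by (simp add: algebra_simps mult_monom)
  finally show ?case .
qed simp

lemma cval_nonpow2:
  assumes m: "m > 0" and np: "\<not> is_pow2 m"
  shows "odd (cval m)"
proof -
  obtain a r where ar: "m = 2^a * r" "odd r" using pow2_odd_decomp[OF m] by blast
  have r1: "r > 1" using ar np m unfolding is_pow2_def by (metis less_one mult.right_neutral mult_0_right nat_neq_iff)
  define Dp where "Dp = {d. d dvd (2::nat)^a}"
  define Dn where "Dn = {d. d dvd m} - Dp"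
  have fin: "finite {d. d dvd m}" using m by simp
  have sub: "Dp \<subseteq> {d. d dvd m}" unfolding Dp_def ar(1) by auto
  have mDn: "m \<in> Dn"
  proof -
    have "\<not> m dvd 2^a"
    proof
      assume "m dvd 2^a"
      then show False using np unfolding dvd_pow2_iff is_pow2_def by blast
    qed
    then show ?thesis unfolding Dn_def Dp_def by simp
  qed
  have "(monom 1 m - 1 :: complex poly) = (\<Prod>d\<in>{d. d dvd m}. cyclotomic_C d)"
    by (rule cyc_prod[OF m])
  also have "\<dots> = (\<Prod>d\<in>Dp. cyclotomic_C d) * (\<Prod>d\<in>Dn. cyclotomic_C d)"
    unfolding Dn_def using prod.subset_diff[OF sub fin] by (simp add: mult.commute)
  also have "(\<Prod>d\<in>Dp. cyclotomic_C d) = monom 1 (2^a) - 1"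
    unfolding Dp_def by (rule cyc_prod[symmetric]) simp
  finally have e0: "(monom 1 m - 1 :: complex poly) = (monom 1 (2^a) - 1) * (\<Prod>d\<in>Dn. cyclotomic_C d)" .
  have e1: "(monom 1 (2^a) - 1) * (\<Prod>d\<in>Dn. cyclotomic_C d) = (monom 1 (2^a) - 1) * (\<Sum>i<r. monom 1 (2^a*i))"
    using e0 geom_monom[of "2^a" r] ar(1) by metis
  have nz: "(monom (1::complex) (2^a) - 1) \<noteq> 0"
  proof
    assume "(monom (1::complex) (2^a) - 1) = 0"
    then have "poly (monom (1::complex) (2^a) - 1) 0 = 0" by simp
    then show False by (simp add: poly_monom power_0_left)
  qed
  from e1 nz have e2: "(\<Prod>d\<in>Dn. cyclotomic_C d) = (\<Sum>i<r. monom 1 (2^a*i))" by simp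
  have "(of_int (\<Prod>d\<in>Dn. cval d) :: complex) = poly (\<Prod>d\<in>Dn. cyclotomic_C d) 1"
    by (simp add: poly_prod cval_C)
  also have "\<dots> = of_nat r" unfolding e2 by (simp add: poly_sum poly_monom)
  finally have "(\<Prod>d\<in>Dn. cval d) = int r" by (metis of_int_eq_iff of_int_of_nat_eq)
  moreover have "cval m dvd (\<Prod>d\<in>Dn. cval d)"
    using mDn fin unfolding Dn_def by (intro dvd_prodI) auto
  ultimately have "cval m dvd int r" by simp
  then show ?thesis using ar(2) by (metis even_of_nat dvd_trans)
qed

lemma cval_odd_iff: "m > 0 \<Longrightarrow> odd (cval m) \<longleftrightarrow> \<not> is_pow2 m"
  using cval_nonpow2 cval_pow2 unfolding is_pow2_def by blast

lemma poly_cyclo_prod: "poly (cyclo_prod K) 1 = (\<Prod>m\<in>#K. cval m)"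
  unfolding cyclo_prod_def cval_def by (induction K) auto

lemma part_a:
  assumes "\<forall>m\<in>#K. m \<ge> 1"
  shows "odd (poly (cyclo_prod K) 1) \<longleftrightarrow> (\<forall>m\<in>#K. \<not> is_pow2 m)"
  using assms unfolding poly_cyclo_prod
proof (induction K)
  case (add x K)
  then show ?case using cval_odd_iff[of x] by auto
qed simp



lemma mat_vec_zero: "A \<in> carrier_mat nr nc \<Longrightarrow> A *\<^sub>v 0\<^sub>v nc = (0\<^sub>v nr :: 'a::semiring_0 vec)"
  by (rule eq_vecI) auto

lemma pow_mat_add: "A \<in> carrier_mat n n \<Longrightarrow> A ^\<^sub>m (a + b) = A ^\<^sub>m a * A ^\<^sub>m b"
proof (induction b)
  case 0 then show ?case by simp
next
  case (Suc b)
  then show ?case by (simp add: assoc_mult_mat[of _ n n _ n _ n])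
qed

lemma pow_mat_mult: "A \<in> carrier_mat n n \<Longrightarrow> (A ^\<^sub>m a) ^\<^sub>m b = A ^\<^sub>m (a * b)"
proof (induction b)
  case 0 then show ?case by simp
next
  case (Suc b)
  then show ?case by (simp add: pow_mat_add[symmetric] add.commute)
qed

lemma pow_mat_Suc': "A \<in> carrier_mat n n \<Longrightarrow> A ^\<^sub>m Suc r = A * A ^\<^sub>m r"
  using pow_mat_add[of A n r 1] pow_mat_add[of A n 1 r] by (simp add: add.commute)

lemma pow_eig:
  assumes B: "B \<in> carrier_mat n n" and u: "u \<in> carrier_vec n" and e: "B *\<^sub>v u = c \<cdot>\<^sub>v u"
  shows "B ^\<^sub>m j *\<^sub>v u = c ^ j \<cdot>\<^sub>v (u :: 'a::comm_ring_1 vec)"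
proof (cases "u = 0\<^sub>v n")
  case True
  then show ?thesis using B by (auto simp: mat_vec_zero intro!: eq_vecI)
next
  case False
  then have "eigenvector B u c" unfolding eigenvector_def using B u e by auto
  then show ?thesis by (rule eigenvector_pow[OF B])
qed

fun wsum :: "'a::comm_ring_1 mat \<Rightarrow> 'a vec \<Rightarrow> nat \<Rightarrow> nat \<Rightarrow> 'a vec" where
  "wsum A x n 0 = 0\<^sub>v n"
| "wsum A x n (Suc i) = x + A *\<^sub>v wsum A x n i"

lemma wsum_carrier: "A \<in> carrier_mat n n \<Longrightarrow> x \<in> carrier_vec n \<Longrightarrow> wsum A x n r \<in> carrier_vec n"
  by (induction r) auto

lemma wsum_hom:
  assumes A: "A \<in> carrier_mat n n" and x: "x \<in> carrier_vec n"
  shows "map_vec (of_int :: int \<Rightarrow> complex) (wsum A x n r) = wsum (map_mat of_int A) (map_vec of_int x) n r"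
proof (induction r)
  case 0 then show ?case by (auto intro!: eq_vecI)
next
  case (Suc r)
  have w: "wsum A x n r \<in> carrier_vec n" using wsum_carrier[OF A x] .
  have "map_vec (of_int :: int \<Rightarrow> complex) (wsum A x n (Suc r)) = map_vec of_int x + map_vec of_int (A *\<^sub>v wsum A x n r)"
    using A x w by (auto intro!: eq_vecI)
  also have "map_vec (of_int :: int \<Rightarrow> complex) (A *\<^sub>v wsum A x n r) = map_mat of_int A *\<^sub>v map_vec of_int (wsum A x n r)"
    by (rule of_int_hom.mult_mat_vec_hom[OF A w])
  finally show ?case using Suc by simp
qed

lemma wsum_eig:
  assumes A: "A \<in> carrier_mat n n" and u: "u \<in> carrier_vec n" and e: "A *\<^sub>v u = c \<cdot>\<^sub>v u"
  shows "wsum A u n r = (\<Sum>i<r. c ^ i) \<cdot>\<^sub>v (u :: complex vec)"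
proof (induction r)
  case 0 then show ?case using u by (auto intro!: eq_vecI)
next
  case (Suc r)
  have "wsum A u n (Suc r) = u + A *\<^sub>v ((\<Sum>i<r. c ^ i) \<cdot>\<^sub>v u)" using Suc by simp
  also have "A *\<^sub>v ((\<Sum>i<r. c ^ i) \<cdot>\<^sub>v u) = (\<Sum>i<r. c ^ i) \<cdot>\<^sub>v (c \<cdot>\<^sub>v u)"
    using mult_mat_vec[OF A u] e by simp
  finally have "wsum A u n (Suc r) = u + (\<Sum>i<r. c ^ i) \<cdot>\<^sub>v (c \<cdot>\<^sub>v u)" .
  moreover have "(\<Sum>i<Suc r. c ^ i) = 1 + c * (\<Sum>i<r. c ^ i)"
    by (subst sum.lessThan_Suc_shift) (simp add: sum_distrib_left)
  ultimately show ?case using u by (auto intro!: eq_vecI simp: algebra_simps)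
qed

lemma wsum_zero: "A \<in> carrier_mat n n \<Longrightarrow> wsum A (0\<^sub>v n) n r = 0\<^sub>v n"
  by (induction r) (auto simp: mat_vec_zero)

lemma wsum_add:
  assumes A: "A \<in> carrier_mat n n" and u: "u \<in> carrier_vec n" and v: "v \<in> carrier_vec n"
  shows "wsum A (u + v) n r = wsum A u n r + wsum A v n r"
proof (induction r)
  case 0 then show ?case by simp
next
  case (Suc r)
  have wu: "wsum A u n r \<in> carrier_vec n" and wv: "wsum A v n r \<in> carrier_vec n"
    using wsum_carrier A u v by auto
  have "wsum A (u + v) n (Suc r) = (u + v) + (A *\<^sub>v wsum A u n r + A *\<^sub>v wsum A v n r)"
    using Suc by (simp add: mult_add_distrib_mat_vec[OF A wu wv])
  moreover have "A *\<^sub>v wsum A u n r \<in> carrier_vec n" "A *\<^sub>v wsum A v n r \<in> carrier_vec n"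
    using A wu wv by auto
  ultimately show ?case using u v by (auto intro!: eq_vecI)
qed

lemma foldr_carrier: "(\<forall>v\<in>set vs. v \<in> carrier_vec n) \<Longrightarrow> foldr (+) vs (0\<^sub>v n) \<in> carrier_vec n"
  by (induction vs) auto

lemma wsum_foldr:
  assumes A: "A \<in> carrier_mat n n"
  shows "(\<forall>v\<in>set vs. v \<in> carrier_vec n \<and> wsum A v n r = 0\<^sub>v n) \<Longrightarrow> wsum A (foldr (+) vs (0\<^sub>v n)) n r = 0\<^sub>v n"
proof (induction vs)
  case Nil then show ?case using wsum_zero[OF A] by simp
next
  case (Cons v vs)
  have c: "foldr (+) vs (0\<^sub>v n) \<in> carrier_vec n" using Cons.prems foldr_carrier by auto
  then show ?case using Cons wsum_add[OF A _ c, of v r] by simp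
qed

lemma wsum_fix:
  assumes A: "A \<in> carrier_mat n n" and x: "x \<in> carrier_vec n"
  shows "A *\<^sub>v wsum A x n r + x = wsum A x n r + (A ^\<^sub>m r) *\<^sub>v (x :: 'a::comm_ring_1 vec)"
proof (induction r)
  case 0 then show ?case using A x by (simp add: mat_vec_zero)
next
  case (Suc r)
  define w where "w = wsum A x n r"
  have w: "w \<in> carrier_vec n" unfolding w_def using wsum_carrier[OF A x] .
  have IH: "A *\<^sub>v w + x = w + (A ^\<^sub>m r) *\<^sub>v x" using Suc unfolding w_def .
  have "A *\<^sub>v (A *\<^sub>v w + x) = A *\<^sub>v (w + (A ^\<^sub>m r) *\<^sub>v x)" using IH by simp
  have P: "A ^\<^sub>m Suc r *\<^sub>v x = A *\<^sub>v (A ^\<^sub>m r *\<^sub>v x)"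
    by (subst pow_mat_Suc'[OF A]) (rule assoc_mult_mat_vec[OF A pow_carrier_mat[OF A] x])
  have L: "A *\<^sub>v (A *\<^sub>v w + x) = A *\<^sub>v (A *\<^sub>v w) + A *\<^sub>v x"
    using A x w by (intro mult_add_distrib_mat_vec[OF A]) auto
  have R: "A *\<^sub>v (w + (A ^\<^sub>m r) *\<^sub>v x) = A *\<^sub>v w + A *\<^sub>v (A ^\<^sub>m r *\<^sub>v x)"
    using A x w by (intro mult_add_distrib_mat_vec[OF A]) (auto intro!: mult_mat_vec_carrier[OF pow_carrier_mat[OF A]])
  have h: "A *\<^sub>v (A *\<^sub>v w) + A *\<^sub>v x = A *\<^sub>v w + (A ^\<^sub>m Suc r) *\<^sub>v x"
    using \<open>A *\<^sub>v (A *\<^sub>v w + x) = A *\<^sub>v (w + (A ^\<^sub>m r) *\<^sub>v x)\<close> L R P by simp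
  have "A *\<^sub>v wsum A x n (Suc r) + x = (A *\<^sub>v x + A *\<^sub>v (A *\<^sub>v w)) + x"
    unfolding wsum.simps w_def[symmetric] using A x w by (subst mult_add_distrib_mat_vec[OF A]) auto
  also have "\<dots> = (A *\<^sub>v (A *\<^sub>v w) + A *\<^sub>v x) + x" using A x w by (auto intro!: eq_vecI)
  also have "\<dots> = (A *\<^sub>v w + (A ^\<^sub>m Suc r) *\<^sub>v x) + x" using h by simp
  also have "\<dots> = (x + A *\<^sub>v w) + (A ^\<^sub>m Suc r) *\<^sub>v x" using A x w by (auto intro!: eq_vecI)
  finally show ?case unfolding w_def by simp
qed

lemma wsum_fixed:
  assumes A: "A \<in> carrier_mat n n" and x: "x \<in> carrier_vec n" and Ar: "A ^\<^sub>m r = 1\<^sub>m n"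
  shows "A *\<^sub>v wsum A x n r = wsum A x n r"
proof -
  have "A *\<^sub>v wsum A x n r + x = wsum A x n r + (x :: 'a vec)"
    using wsum_fix[OF A x, of r] Ar x by simp
  moreover have "A *\<^sub>v wsum A x n r \<in> carrier_vec n" "wsum A x n r \<in> carrier_vec n"
    using A wsum_carrier[OF A x] by auto
  ultimately show ?thesis using x
  proof (intro eq_vecI)
    fix i assume eq: "A *\<^sub>v wsum A x n r + x = wsum A x n r + x"
      and c: "A *\<^sub>v wsum A x n r \<in> carrier_vec n" "wsum A x n r \<in> carrier_vec n" "x \<in> carrier_vec n"
      and i: "i < dim_vec (wsum A x n r)"
    have "(A *\<^sub>v wsum A x n r + x) $ i = (wsum A x n r + x) $ i" using eq by simp
    then show "(A *\<^sub>v wsum A x n r) $ i = wsum A x n r $ i" using c i by simp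
  qed (use A in auto)
qed



lemma foldr_append_add:
  assumes "\<forall>v\<in>set vs. v \<in> carrier_vec n" "\<forall>v\<in>set ws. v \<in> carrier_vec n"
  shows "foldr (+) (vs @ ws) (0\<^sub>v n) = foldr (+) vs (0\<^sub>v n) + foldr (+) ws (0\<^sub>v n :: 'a::ab_group_add vec)"
  using assms
proof (induction vs)
  case Nil then show ?case using foldr_carrier[of ws n] by simp
next
  case (Cons v vs)
  have c: "foldr (+) vs (0\<^sub>v n) \<in> carrier_vec n" "foldr (+) ws (0\<^sub>v n) \<in> carrier_vec n" "v \<in> carrier_vec n"
    using Cons.prems foldr_carrier by auto
  then show ?case using Cons by (auto intro!: eq_vecI)
qed

lemma foldr_uminus:
  assumes "\<forall>v\<in>set vs. v \<in> carrier_vec n"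
  shows "foldr (+) (map uminus vs) (0\<^sub>v n) = - foldr (+) vs (0\<^sub>v n :: 'a::ab_group_add vec)"
  using assms
proof (induction vs)
  case Nil then show ?case by simp
next
  case (Cons v vs)
  have c: "foldr (+) vs (0\<^sub>v n) \<in> carrier_vec n" "v \<in> carrier_vec n"
    using Cons.prems foldr_carrier by auto
  then show ?case using Cons by (auto intro!: eq_vecI)
qed

lemma eig_sum_zero: "0\<^sub>v n \<in> eig_sum n B p"
  unfolding eig_sum_def by (rule CollectI, rule exI[of _ "[]"]) simp

lemma eig_sum_carrier: "u \<in> eig_sum n B p \<Longrightarrow> u \<in> carrier_vec n"
  unfolding eig_sum_def using foldr_carrier by auto

lemma eig_sum_add: "u \<in> eig_sum n B p \<Longrightarrow> v \<in> eig_sum n B p \<Longrightarrow> u + v \<in> eig_sum n B p"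
  unfolding eig_sum_def
proof (clarify)
  fix vs ws
  assume h1: "\<forall>v\<in>set vs. v \<in> carrier_vec n \<and> (\<exists>c. poly p c = 0 \<and> B *\<^sub>v v = c \<cdot>\<^sub>v v)"
    and h2: "\<forall>v\<in>set ws. v \<in> carrier_vec n \<and> (\<exists>c. poly p c = 0 \<and> B *\<^sub>v v = c \<cdot>\<^sub>v v)"
  show "\<exists>xs. foldr (+) vs (0\<^sub>v n) + foldr (+) ws (0\<^sub>v n) = foldr (+) xs (0\<^sub>v n) \<and>
           (\<forall>v\<in>set xs. v \<in> carrier_vec n \<and> (\<exists>c. poly p c = 0 \<and> B *\<^sub>v v = c \<cdot>\<^sub>v v))"
    by (rule exI[of _ "vs @ ws"]) (use h1 h2 foldr_append_add[of vs n ws] in auto)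
qed

lemma eig_sum_neg:
  assumes B: "B \<in> carrier_mat n n"
  shows "u \<in> eig_sum n B p \<Longrightarrow> - u \<in> eig_sum n B p"
  unfolding eig_sum_def
proof (clarify)
  fix vs
  assume h1: "\<forall>v\<in>set vs. v \<in> carrier_vec n \<and> (\<exists>c. poly p c = 0 \<and> B *\<^sub>v v = c \<cdot>\<^sub>v v)"
  have h2: "\<forall>v\<in>set (map uminus vs). v \<in> carrier_vec n \<and> (\<exists>c. poly p c = 0 \<and> B *\<^sub>v v = c \<cdot>\<^sub>v v)"
  proof
    fix w assume "w \<in> set (map uminus vs)"
    then obtain v where v: "v \<in> set vs" "w = - v" by auto
    then obtain c where c: "poly p c = 0" "B *\<^sub>v v = c \<cdot>\<^sub>v v" and vc: "v \<in> carrier_vec n" using h1 by auto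
    have "B *\<^sub>v (- v) = - (B *\<^sub>v v)" using B vc by (auto intro!: eq_vecI simp: scalar_prod_uminus_right)
    also have "\<dots> = c \<cdot>\<^sub>v (- v)" using c(2) vc by (auto intro!: eq_vecI)
    finally show "w \<in> carrier_vec n \<and> (\<exists>c. poly p c = 0 \<and> B *\<^sub>v w = c \<cdot>\<^sub>v w)" using v vc c by auto
  qed
  show "\<exists>xs. - foldr (+) vs (0\<^sub>v n) = foldr (+) xs (0\<^sub>v n) \<and>
           (\<forall>v\<in>set xs. v \<in> carrier_vec n \<and> (\<exists>c. poly p c = 0 \<and> B *\<^sub>v v = c \<cdot>\<^sub>v v))"
    by (rule exI[of _ "map uminus vs"]) (use h1 h2 foldr_uminus[of vs n] in auto)
qed

lemma sqrt_decomp: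
  fixes B :: "complex mat"
  assumes B: "B \<in> carrier_mat n n"
  shows "y \<in> carrier_vec n \<Longrightarrow> c \<noteq> 0 \<Longrightarrow> (B ^\<^sub>m (2^a)) *\<^sub>v y = c \<cdot>\<^sub>v y \<Longrightarrow>
    \<exists>vs. y = foldr (+) vs (0\<^sub>v n) \<and> (\<forall>v\<in>set vs. v \<in> carrier_vec n \<and> v \<noteq> 0\<^sub>v n \<and> (\<exists>l. l^(2^a) = c \<and> B *\<^sub>v v = l \<cdot>\<^sub>v v))"
proof (induction a arbitrary: y c)
  case 0
  have "B ^\<^sub>m (2^0) = B" using B by simp
  then have e: "B *\<^sub>v y = c \<cdot>\<^sub>v y" using 0 by simp
  show ?case
  proof (cases "y = 0\<^sub>v n")
    case True then show ?thesis by (intro exI[of _ "[]"]) simp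
  next
    case False then show ?thesis using 0 e by (intro exI[of _ "[y]"]) auto
  qed
next
  case (Suc a)
  define D where "D = B ^\<^sub>m (2^a)"
  have D: "D \<in> carrier_mat n n" unfolding D_def using B by simp
  have y: "y \<in> carrier_vec n" using Suc by simp
  have "B ^\<^sub>m (2 ^ Suc a) = D * D" unfolding D_def using pow_mat_add[OF B, of "2^a" "2^a"] by (simp add: mult_2)
  then have DD: "D *\<^sub>v (D *\<^sub>v y) = c \<cdot>\<^sub>v y" using Suc.prems D y by simp
  define d where "d = csqrt c"
  have dd: "d * d = c" unfolding d_def by (metis power2_csqrt power2_eq_square)
  have d0: "d \<noteq> 0" using dd Suc.prems(2) by auto
  define y1 where "y1 = (1/2) \<cdot>\<^sub>v (y + (1/d) \<cdot>\<^sub>v (D *\<^sub>v y))"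
  define y2 where "y2 = (1/2) \<cdot>\<^sub>v (y - (1/d) \<cdot>\<^sub>v (D *\<^sub>v y))"
  have Dy: "D *\<^sub>v y \<in> carrier_vec n" using D y by simp
  have y1c: "y1 \<in> carrier_vec n" and y2c: "y2 \<in> carrier_vec n" unfolding y1_def y2_def using Dy y by auto
  have "D *\<^sub>v y1 = (1/2) \<cdot>\<^sub>v (D *\<^sub>v y + (1/d) \<cdot>\<^sub>v (D *\<^sub>v (D *\<^sub>v y)))"
    unfolding y1_def using D y Dy
    by (simp add: mult_mat_vec[OF D] mult_add_distrib_mat_vec[OF D])
  also have "\<dots> = d \<cdot>\<^sub>v y1" unfolding DD y1_def using y Dy d0 dd D
    by (auto intro!: eq_vecI simp: field_simps)
  finally have e1: "D *\<^sub>v y1 = d \<cdot>\<^sub>v y1" .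
  have "D *\<^sub>v y2 = (1/2) \<cdot>\<^sub>v (D *\<^sub>v y - (1/d) \<cdot>\<^sub>v (D *\<^sub>v (D *\<^sub>v y)))"
    unfolding y2_def using D y Dy
    by (simp add: mult_mat_vec[OF D] mult_minus_distrib_mat_vec[OF D])
  also have "\<dots> = (-d) \<cdot>\<^sub>v y2" unfolding DD y2_def using y Dy d0 dd D
    by (auto intro!: eq_vecI simp: field_simps)
  finally have e2: "D *\<^sub>v y2 = (-d) \<cdot>\<^sub>v y2" .
  obtain vs1 where v1: "y1 = foldr (+) vs1 (0\<^sub>v n)"
    "\<forall>v\<in>set vs1. v \<in> carrier_vec n \<and> v \<noteq> 0\<^sub>v n \<and> (\<exists>l. l^(2^a) = d \<and> B *\<^sub>v v = l \<cdot>\<^sub>v v)"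
    using Suc.IH[OF y1c d0 e1[unfolded D_def]] by blast
  obtain vs2 where v2: "y2 = foldr (+) vs2 (0\<^sub>v n)"
    "\<forall>v\<in>set vs2. v \<in> carrier_vec n \<and> v \<noteq> 0\<^sub>v n \<and> (\<exists>l. l^(2^a) = -d \<and> B *\<^sub>v v = l \<cdot>\<^sub>v v)"
    using Suc.IH[OF y2c _ e2[unfolded D_def]] d0 by auto
  have "y = y1 + y2" unfolding y1_def y2_def using y Dy D by (auto intro!: eq_vecI simp: field_simps)
  also have "\<dots> = foldr (+) (vs1 @ vs2) (0\<^sub>v n)"
    using foldr_append_add[of vs1 n vs2] v1 v2 by auto
  finally have "y = foldr (+) (vs1 @ vs2) (0\<^sub>v n)" .
  moreover have "\<forall>v\<in>set (vs1 @ vs2). v \<in> carrier_vec n \<and> v \<noteq> 0\<^sub>v n \<and> (\<exists>l. l^(2^Suc a) = c \<and> B *\<^sub>v v = l \<cdot>\<^sub>v v)"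
  proof
    fix v assume "v \<in> set (vs1 @ vs2)"
    then have "v \<in> carrier_vec n \<and> v \<noteq> 0\<^sub>v n \<and> (\<exists>l. (l^(2^a) = d \<or> l^(2^a) = -d) \<and> B *\<^sub>v v = l \<cdot>\<^sub>v v)"
      using v1 v2 by auto
    then obtain l where "v \<in> carrier_vec n" "v \<noteq> 0\<^sub>v n" "l^(2^a) = d \<or> l^(2^a) = -d" "B *\<^sub>v v = l \<cdot>\<^sub>v v" by blast
    moreover have "l^(2^Suc a) = (l^(2^a)) * (l^(2^a))" by (simp add: power_mult[symmetric] mult_2 power_add)
    ultimately show "v \<in> carrier_vec n \<and> v \<noteq> 0\<^sub>v n \<and> (\<exists>l. l^(2^Suc a) = c \<and> B *\<^sub>v v = l \<cdot>\<^sub>v v)"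
      using dd by auto
  qed
  ultimately show ?case by blast
qed



definition cst :: "int vec set \<Rightarrow> int vec \<Rightarrow> int vec set" where
  "cst H x = {x + y | y. y \<in> H}"

lemma lat_index_cst: "lat_index A B = card {cst B x | x. x \<in> A}"
  unfolding lat_index_def cst_def by simp

locale subgrp =
  fixes n :: nat and H :: "int vec set"
  assumes sub: "H \<subseteq> carrier_vec n" and zero: "0\<^sub>v n \<in> H"
    and add: "\<And>a b. a \<in> H \<Longrightarrow> b \<in> H \<Longrightarrow> a + b \<in> H"
    and neg: "\<And>a. a \<in> H \<Longrightarrow> - a \<in> H"
begin

lemma cst_eq:
  assumes x: "x \<in> carrier_vec n" and x': "x' \<in> carrier_vec n" and d: "x - x' \<in> H"
  shows "cst H x = cst H x'"
proof
  show "cst H x \<subseteq> cst H x'"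
  proof
    fix z assume "z \<in> cst H x"
    then obtain y where y: "y \<in> H" "z = x + y" unfolding cst_def by blast
    have yc: "y \<in> carrier_vec n" using y sub by auto
    have "z = x' + ((x - x') + y)" using y(2) x x' yc by (auto intro!: eq_vecI)
    moreover have "(x - x') + y \<in> H" using add d y by simp
    ultimately show "z \<in> cst H x'" unfolding cst_def by blast
  qed
next
  show "cst H x' \<subseteq> cst H x"
  proof
    fix z assume "z \<in> cst H x'"
    then obtain y where y: "y \<in> H" "z = x' + y" unfolding cst_def by blast
    have yc: "y \<in> carrier_vec n" using y sub by auto
    have "z = x + (- (x - x') + y)" using y(2) x x' yc by (auto intro!: eq_vecI)
    moreover have "- (x - x') + y \<in> H" using add neg d y by simp
    ultimately show "z \<in> cst H x" unfolding cst_def by blast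
  qed
qed

lemma cst_mem: "x \<in> carrier_vec n \<Longrightarrow> x \<in> cst H x"
  unfolding cst_def using zero by force

lemma cst_zero: "cst H (0\<^sub>v n) = H"
  unfolding cst_def using sub by force

lemma cst_self: "x \<in> H \<Longrightarrow> cst H x = H"
  using cst_eq[of x "0\<^sub>v n"] sub cst_zero by auto

lemma cst_diff: "y \<in> carrier_vec n \<Longrightarrow> z \<in> cst H y \<Longrightarrow> z - y \<in> H"
proof -
  assume y: "y \<in> carrier_vec n" and "z \<in> cst H y"
  then obtain h where h: "h \<in> H" "z = y + h" unfolding cst_def by blast
  have "h \<in> carrier_vec n" using h sub by auto
  then have "z - y = h" using h y by (auto intro!: eq_vecI)
  then show ?thesis using h by simp
qed

end

lemma vec_of_int_add: "u \<in> carrier_vec n \<Longrightarrow> v \<in> carrier_vec n \<Longrightarrow>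
  map_vec (of_int :: int \<Rightarrow> complex) (u + v) = map_vec of_int u + map_vec of_int v"
  by (auto intro!: eq_vecI)

lemma vec_of_int_neg: "map_vec (of_int :: int \<Rightarrow> complex) (- u) = - map_vec of_int u"
  by (auto intro!: eq_vecI)

lemma roots_cyclo: "poly (of_int_poly (cyclo_prod K) :: complex poly) z = 0 \<longleftrightarrow> (\<exists>m\<in>#K. z \<in> prims m)"
  unfolding cyclo_prod_def
proof (induction K)
  case (add x K)
  then show ?case by (simp add: of_int_poly_hom.hom_mult cyclotomic_map cyclotomic_C_root)
qed simp

locale lat =
  fixes n :: nat and M :: "int mat" and L1 :: "int vec set" and k :: nat
  assumes M: "M \<in> carrier_mat n n" and k0: "k > 0" and Mk: "M ^\<^sub>m k = 1\<^sub>m n"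
    and sub: "L1 \<subseteq> carrier_vec n" and zero: "0\<^sub>v n \<in> L1"
    and add: "\<And>x y. x \<in> L1 \<Longrightarrow> y \<in> L1 \<Longrightarrow> x + y \<in> L1"
    and neg: "\<And>x. x \<in> L1 \<Longrightarrow> - x \<in> L1"
    and inv: "\<And>x. x \<in> L1 \<Longrightarrow> M *\<^sub>v x \<in> L1"
    and idx: "lat_index (carrier_vec n) L1 = 2"
begin

sublocale L: subgrp n L1 by unfold_locales (use sub zero add neg in auto)

lemma S_card: "card {cst L1 x | x. x \<in> carrier_vec n} = 2"
  using idx unfolding lat_index_cst .

lemma ex_out: "\<exists>x0\<in>carrier_vec n. x0 \<notin> L1"
proof (rule ccontr)
  assume "\<not> ?thesis"
  then have "\<forall>x\<in>carrier_vec n. x \<in> L1" by blast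
  then have "{cst L1 x | x. x \<in> carrier_vec n} \<subseteq> {L1}" using L.cst_self by auto
  moreover have "cst L1 (0\<^sub>v n) \<in> {cst L1 x | x. x \<in> carrier_vec n}" using zero_carrier_vec by blast
  then have "L1 \<in> {cst L1 x | x. x \<in> carrier_vec n}" using L.cst_zero by simp
  ultimately have "{cst L1 x | x. x \<in> carrier_vec n} = {L1}" by blast
  then show False using S_card by simp
qed

lemma out_out:
  assumes x: "x \<in> carrier_vec n" "x \<notin> L1" and y: "y \<in> carrier_vec n" "y \<notin> L1"
  shows "x - y \<in> L1"
proof -
  let ?S = "{cst L1 x | x. x \<in> carrier_vec n}"
  have fin: "finite ?S"
  proof (rule ccontr)
    assume "infinite ?S"
    then have "card ?S = 0" by simp
    then show False using S_card by simp
  qed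
  have "cst L1 (0\<^sub>v n) \<in> ?S" using zero_carrier_vec by blast
  then have in1: "L1 \<in> ?S" using L.cst_zero by simp
  have in2: "cst L1 x \<in> ?S" "cst L1 y \<in> ?S" using x(1) y(1) by blast+
  have ne1: "cst L1 x \<noteq> L1"
  proof
    assume "cst L1 x = L1"
    then have "x \<in> L1" using L.cst_mem[OF x(1)] by simp
    then show False using x(2) by simp
  qed
  have ne2: "cst L1 y \<noteq> L1"
  proof
    assume "cst L1 y = L1"
    then have "y \<in> L1" using L.cst_mem[OF y(1)] by simp
    then show False using y(2) by simp
  qed
  have "cst L1 x = cst L1 y"
  proof (rule ccontr)
    assume ne3: "cst L1 x \<noteq> cst L1 y"
    have "card {L1, cst L1 x, cst L1 y} \<le> card ?S"
      by (rule card_mono[OF fin]) (use in1 in2 in blast)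
    moreover have "card {L1, cst L1 x, cst L1 y} = 3" using ne1 ne2 ne3 by (simp add: card_insert_if)
    ultimately show False using S_card by simp
  qed
  then have "x \<in> cst L1 y" using L.cst_mem[OF x(1)] by simp
  then show ?thesis using L.cst_diff[OF y(1)] by simp
qed

lemma par_add:
  assumes x: "x \<in> carrier_vec n" and y: "y \<in> carrier_vec n"
  shows "x + y \<in> L1 \<longleftrightarrow> (x \<in> L1 \<longleftrightarrow> y \<in> L1)"
proof (cases "x \<in> L1")
  case True
  show ?thesis
  proof
    assume "x + y \<in> L1"
    moreover have "y = (x + y) + (- x)" using x y by (auto intro!: eq_vecI)
    ultimately show "x \<in> L1 \<longleftrightarrow> y \<in> L1" using True add neg by metis
  next
    assume "x \<in> L1 \<longleftrightarrow> y \<in> L1"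
    then show "x + y \<in> L1" using True add by auto
  qed
next
  case False
  show ?thesis
  proof (cases "y \<in> L1")
    case True
    have "x = (x + y) + (- y)" using x y by (auto intro!: eq_vecI)
    then have "x + y \<notin> L1" using False True add neg by metis
    then show ?thesis using False True by simp
  next
    case yn: False
    have "- y \<notin> L1" using yn neg by force
    then have "x - (- y) \<in> L1" using out_out[OF x False] y by simp
    moreover have "x - (- y) = x + y" using x y by (auto intro!: eq_vecI)
    ultimately show ?thesis using False yn by simp
  qed
qed

lemma pow_inv: "v \<in> L1 \<Longrightarrow> M ^\<^sub>m j *\<^sub>v v \<in> L1"
proof (induction j arbitrary: v)
  case 0 then show ?case using sub M by auto
next
  case (Suc j)
  have v: "v \<in> carrier_vec n" using Suc.prems sub by auto
  have "M ^\<^sub>m Suc j *\<^sub>v v = M ^\<^sub>m j *\<^sub>v (M *\<^sub>v v)" using M v by (simp add: assoc_mult_mat_vec[OF pow_carrier_mat[OF M] M v])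
  then show ?case using Suc inv by simp
qed

lemma par_M: assumes x: "x \<in> carrier_vec n" shows "M *\<^sub>v x \<in> L1 \<longleftrightarrow> x \<in> L1"
proof
  assume h: "M *\<^sub>v x \<in> L1"
  obtain k' where k': "k = Suc k'" using k0 by (cases k) auto
  have "M ^\<^sub>m k *\<^sub>v x = M ^\<^sub>m k' *\<^sub>v (M *\<^sub>v x)" using M x k' by (simp add: assoc_mult_mat_vec[OF pow_carrier_mat[OF M] M x])
  then have "x = M ^\<^sub>m k' *\<^sub>v (M *\<^sub>v x)" using Mk x by simp
  then show "x \<in> L1" using pow_inv[OF h, of k'] by simp
qed (rule inv)

lemma par_pow: "x \<in> carrier_vec n \<Longrightarrow> M ^\<^sub>m j *\<^sub>v x \<in> L1 \<longleftrightarrow> x \<in> L1"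
proof (induction j arbitrary: x)
  case 0 then show ?case using M by simp
next
  case (Suc j)
  have "M ^\<^sub>m Suc j *\<^sub>v x = M ^\<^sub>m j *\<^sub>v (M *\<^sub>v x)" using M Suc.prems by (simp add: assoc_mult_mat_vec[OF pow_carrier_mat[OF M] M Suc.prems])
  then show ?case using Suc.IH[of "M *\<^sub>v x"] par_M[OF Suc.prems] M Suc.prems by simp
qed

lemma par_wsum:
  assumes x: "x \<in> carrier_vec n"
  shows "wsum (M ^\<^sub>m j) x n r \<in> L1 \<longleftrightarrow> (even r \<or> x \<in> L1)"
proof (induction r)
  case 0 then show ?case using zero by simp
next
  case (Suc r)
  have w: "wsum (M ^\<^sub>m j) x n r \<in> carrier_vec n" using wsum_carrier[OF pow_carrier_mat[OF M] x] .
  have "wsum (M ^\<^sub>m j) x n (Suc r) \<in> L1 \<longleftrightarrow> (x \<in> L1 \<longleftrightarrow> M ^\<^sub>m j *\<^sub>v wsum (M ^\<^sub>m j) x n r \<in> L1)"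
    using par_add[OF x mult_mat_vec_carrier[OF pow_carrier_mat[OF M] w]] by simp
  also have "\<dots> \<longleftrightarrow> (x \<in> L1 \<longleftrightarrow> wsum (M ^\<^sub>m j) x n r \<in> L1)" using par_pow[OF w] by simp
  finally show ?case using Suc by auto
qed

end



context lat
begin

lemma Mc_carr: "map_mat (of_int :: int \<Rightarrow> complex) M \<in> carrier_mat n n"
  using M by simp

lemma Mc_pow: "map_mat (of_int :: int \<Rightarrow> complex) (M ^\<^sub>m j) = map_mat of_int M ^\<^sub>m j"
  by (rule of_int_hom.mat_hom_pow[OF M])

lemma Mck: "map_mat (of_int :: int \<Rightarrow> complex) M ^\<^sub>m k = 1\<^sub>m n"
  using Mc_pow[of k] Mk of_int_hom.mat_hom_one by metis

lemma lat_part4: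
  assumes kr: "k = 2^a * r" "odd r"
    and v: "v \<in> carrier_vec n"
    and ve: "map_vec of_int v \<in> eig_sum n (map_mat of_int M) P"
    and roots: "\<And>c. poly P c = 0 \<Longrightarrow> c^(2^a) \<noteq> 1"
  shows "v \<in> L1"
proof -
  let ?Mc = "map_mat (of_int :: int \<Rightarrow> complex) M"
  define A where "A = M ^\<^sub>m (2^a)"
  have A: "A \<in> carrier_mat n n" unfolding A_def using M by simp
  have Acar: "map_mat (of_int :: int \<Rightarrow> complex) A \<in> carrier_mat n n" using A by simp
  have Ac: "map_mat (of_int :: int \<Rightarrow> complex) A = ?Mc ^\<^sub>m (2^a)" unfolding A_def by (rule Mc_pow)
  from ve obtain vs where vs: "map_vec of_int v = foldr (+) vs (0\<^sub>v n)"
    "\<forall>u\<in>set vs. u \<in> carrier_vec n \<and> (\<exists>c. poly P c = 0 \<and> ?Mc *\<^sub>v u = c \<cdot>\<^sub>v u)"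
    unfolding eig_sum_def by blast
  have "\<forall>u\<in>set vs. u \<in> carrier_vec n \<and> wsum (map_mat of_int A) u n r = 0\<^sub>v n"
  proof
    fix u assume "u \<in> set vs"
    then obtain c where u: "u \<in> carrier_vec n" "poly P c = 0" "?Mc *\<^sub>v u = c \<cdot>\<^sub>v u" using vs(2) by blast
    have e: "map_mat of_int A *\<^sub>v u = c^(2^a) \<cdot>\<^sub>v u" unfolding Ac by (rule pow_eig[OF Mc_carr u(1) u(3)])
    have ws: "wsum (map_mat of_int A) u n r = (\<Sum>i<r. (c^(2^a))^i) \<cdot>\<^sub>v u"
      by (rule wsum_eig[OF Acar u(1) e])
    have "wsum (map_mat of_int A) u n r = 0\<^sub>v n"
    proof (cases "u = 0\<^sub>v n")
      case True then show ?thesis using ws by (auto intro!: eq_vecI)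
    next
      case False
      then obtain i where i: "i < n" "u $ i \<noteq> 0" using u(1) by (metis eq_vecI carrier_vecD index_zero_vec)
      have "?Mc ^\<^sub>m k *\<^sub>v u = c^k \<cdot>\<^sub>v u" by (rule pow_eig[OF Mc_carr u(1) u(3)])
      then have "u = c^k \<cdot>\<^sub>v u" using Mck u(1) by simp
      then have "u $ i = c^k * u $ i" using i u(1) by (metis index_smult_vec(1) carrier_vecD)
      then have ck: "c^k = 1" using i(2) by simp
      have ne: "c^(2^a) \<noteq> 1" using roots u(2) by blast
      have "(\<Sum>i<r. (c^(2^a))^i) = ((c^(2^a))^r - 1) / (c^(2^a) - 1)" by (rule geometric_sum[OF ne])
      also have "(c^(2^a))^r = 1" using ck kr(1) by (simp add: power_mult)
      finally have "(\<Sum>i<r. (c^(2^a))^i) = 0" by simp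
      then show ?thesis using ws u(1) by (auto intro!: eq_vecI)
    qed
    then show "u \<in> carrier_vec n \<and> wsum (map_mat of_int A) u n r = 0\<^sub>v n" using u(1) by simp
  qed
  then have "wsum (map_mat of_int A) (foldr (+) vs (0\<^sub>v n)) n r = 0\<^sub>v n" by (rule wsum_foldr[OF Acar])
  then have "map_vec (of_int :: int \<Rightarrow> complex) (wsum A v n r) = 0\<^sub>v n" using wsum_hom[OF A v] vs(1) by simp
  then have "wsum A v n r = 0\<^sub>v n" by simp
  then have "wsum A v n r \<in> L1" using zero by simp
  then show ?thesis using par_wsum[OF v] kr(2) unfolding A_def by simp
qed

lemma lat_y:
  assumes kr: "k = 2^a * r" "odd r"
  shows "\<exists>y\<in>carrier_vec n. y \<notin> L1 \<and> (\<exists>vs. map_vec of_int y = foldr (+) vs (0\<^sub>v n) \<and>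
     (\<forall>u\<in>set vs. u \<in> carrier_vec n \<and> u \<noteq> 0\<^sub>v n \<and> (\<exists>l. l^(2^a) = 1 \<and> map_mat (of_int :: int \<Rightarrow> complex) M *\<^sub>v u = l \<cdot>\<^sub>v u)))"
proof -
  let ?Mc = "map_mat (of_int :: int \<Rightarrow> complex) M"
  obtain x0 where x0: "x0 \<in> carrier_vec n" "x0 \<notin> L1" using ex_out by blast
  define A where "A = M ^\<^sub>m (2^a)"
  have A: "A \<in> carrier_mat n n" unfolding A_def using M by simp
  define y where "y = wsum A x0 n r"
  have yc: "y \<in> carrier_vec n" unfolding y_def by (rule wsum_carrier[OF A x0(1)])
  have yn: "y \<notin> L1" using par_wsum[OF x0(1), of "2^a" r] x0(2) kr(2) unfolding y_def A_def by simp
  have Ar: "A ^\<^sub>m r = 1\<^sub>m n" unfolding A_def using pow_mat_mult[OF M] kr(1) Mk by simp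
  have Ay: "A *\<^sub>v y = y" unfolding y_def by (rule wsum_fixed[OF A x0(1) Ar])
  then have "map_vec (of_int :: int \<Rightarrow> complex) (A *\<^sub>v y) = map_vec of_int y" by simp
  then have "(?Mc ^\<^sub>m (2^a)) *\<^sub>v map_vec of_int y = 1 \<cdot>\<^sub>v map_vec of_int y"
    using of_int_hom.mult_mat_vec_hom[OF A yc] Mc_pow[of "2^a"] unfolding A_def by (metis scalar_vec_one)
  from sqrt_decomp[OF Mc_carr _ _ this] yc obtain vs where
    "map_vec of_int y = foldr (+) vs (0\<^sub>v n)"
    "\<forall>u\<in>set vs. u \<in> carrier_vec n \<and> u \<noteq> 0\<^sub>v n \<and> (\<exists>l. l^(2^a) = 1 \<and> ?Mc *\<^sub>v u = l \<cdot>\<^sub>v u)"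
    by auto
  then show ?thesis using yc yn by blast
qed

end



theorem lemma2p12:
  fixes n :: nat and M :: "int mat" and L1 :: "int vec set"
    and J1 J2 :: "nat multiset"
  assumes M_carr: "M \<in> carrier_mat n n"
    and M_fin: "\<exists>k>0. M ^\<^sub>m k = 1\<^sub>m n"
    and L1_sub: "L1 \<subseteq> carrier_vec n"
    and L1_zero: "0\<^sub>v n \<in> L1"
    and L1_add: "\<And>x y. x \<in> L1 \<Longrightarrow> y \<in> L1 \<Longrightarrow> x + y \<in> L1"
    and L1_neg: "\<And>x. x \<in> L1 \<Longrightarrow> - x \<in> L1"
    and L1_inv: "\<And>x. x \<in> L1 \<Longrightarrow> M *\<^sub>v x \<in> L1"
    and L1_index: "lat_index (carrier_vec n) L1 = 2"
    and J1: "\<forall>m\<in>#J1. m \<ge> 1 \<and> \<not> is_pow2 m"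
    and J2: "\<forall>m\<in>#J2. is_pow2 m"
    and fact: "char_poly M = cyclo_prod J1 * cyclo_prod J2"
  shows "(\<forall>K::nat multiset. (\<forall>m\<in>#K. m \<ge> 1) \<longrightarrow>
            (odd (poly (cyclo_prod K) 1) \<longleftrightarrow> (\<forall>m\<in>#K. \<not> is_pow2 m)))
       \<and> J2 \<noteq> {#}
       \<and> cyclo_prod J2 \<noteq> 1
       \<and> (\<forall>K::nat multiset. (\<forall>m\<in>#K. m \<ge> 1) \<and> cyclo_prod K dvd char_poly M
            \<and> cyclo_prod K dvd cyclo_prod J1 \<longrightarrow>
              lat_part n M (cyclo_prod K) (carrier_vec n) = lat_part n M (cyclo_prod K) L1)
       \<and> (\<forall>K::nat multiset. (\<forall>m\<in>#K. m \<ge> 1) \<and> cyclo_prod K dvd char_poly M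
            \<and> cyclo_prod J2 dvd cyclo_prod K \<longrightarrow>
              lat_index (lat_part n M (cyclo_prod K) (carrier_vec n))
                        (lat_part n M (cyclo_prod K) L1) = 2)"
proof -
  obtain k where k: "k > 0" "M ^\<^sub>m k = 1\<^sub>m n" using M_fin by blast
  interpret lat n M L1 k
    by unfold_locales (use M_carr k L1_sub L1_zero L1_add L1_neg L1_inv L1_index in auto)
  obtain a r where kr: "k = 2^a * r" "odd r" using pow2_odd_decomp[OF k(1)] by blast
  let ?Mc = "map_mat (of_int :: int \<Rightarrow> complex) M"
  have PA: "\<forall>K::nat multiset. (\<forall>m\<in>#K. m \<ge> 1) \<longrightarrow>
            (odd (poly (cyclo_prod K) 1) \<longleftrightarrow> (\<forall>m\<in>#K. \<not> is_pow2 m))"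
    using part_a by blast
  have notJ1: "\<not> poly (of_int_poly (cyclo_prod J1) :: complex poly) l = 0" if "l^(2^a) = 1" for l
  proof
    assume "poly (of_int_poly (cyclo_prod J1) :: complex poly) l = 0"
    then obtain m where m: "m \<in># J1" "l \<in> prims m" using roots_cyclo by blast
    then have "m dvd 2^a" using prims_pow[OF m(2)] that by simp
    then have "is_pow2 m" unfolding dvd_pow2_iff is_pow2_def by blast
    then show False using J1 m(1) by blast
  qed
  obtain y vs where y: "y \<in> carrier_vec n" "y \<notin> L1" "map_vec of_int y = foldr (+) vs (0\<^sub>v n)"
    "\<forall>u\<in>set vs. u \<in> carrier_vec n \<and> u \<noteq> 0\<^sub>v n \<and> (\<exists>l. l^(2^a) = 1 \<and> ?Mc *\<^sub>v u = l \<cdot>\<^sub>v u)"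
    using lat_y[OF kr] by blast
  have rootJ2: "\<exists>l. poly (of_int_poly (cyclo_prod J2) :: complex poly) l = 0 \<and> ?Mc *\<^sub>v u = l \<cdot>\<^sub>v u"
    if u: "u \<in> set vs" for u
  proof -
    obtain l where l: "u \<in> carrier_vec n" "u \<noteq> 0\<^sub>v n" "l^(2^a) = 1" "?Mc *\<^sub>v u = l \<cdot>\<^sub>v u"
      using y(4) u by blast
    have "eigenvalue ?Mc l" unfolding eigenvalue_def eigenvector_def using l M_carr by auto
    then have "poly (char_poly ?Mc) l = 0" using eigenvalue_root_char_poly[OF Mc_carr] by simp
    moreover have "char_poly ?Mc = of_int_poly (char_poly M)" by (rule of_int_hom.char_poly_hom[OF M_carr])
    ultimately have "poly (of_int_poly (cyclo_prod J1) * of_int_poly (cyclo_prod J2) :: complex poly) l = 0"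
      using fact by (simp add: of_int_poly_hom.hom_mult)
    then have "poly (of_int_poly (cyclo_prod J2) :: complex poly) l = 0" using notJ1[OF l(3)] by simp
    then show ?thesis using l(4) by blast
  qed
  have "y \<noteq> 0\<^sub>v n" using y(2) L1_zero by auto
  then have "map_vec (of_int :: int \<Rightarrow> complex) y \<noteq> 0\<^sub>v n" by simp
  then have "vs \<noteq> []" using y(3) by auto
  then obtain u where "u \<in> set vs" by (cases vs) auto
  then obtain l0 where l0: "poly (of_int_poly (cyclo_prod J2) :: complex poly) l0 = 0" using rootJ2 by blast
  have J2ne: "J2 \<noteq> {#}"
  proof
    assume "J2 = {#}"
    then show False using l0 by (simp add: cyclo_prod_def)
  qed
  have J2one: "cyclo_prod J2 \<noteq> 1"
  proof
    assume "cyclo_prod J2 = 1"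
    then show False using l0 by simp
  qed
  have P4: "\<forall>K::nat multiset. (\<forall>m\<in>#K. m \<ge> 1) \<and> cyclo_prod K dvd char_poly M
            \<and> cyclo_prod K dvd cyclo_prod J1 \<longrightarrow>
              lat_part n M (cyclo_prod K) (carrier_vec n) = lat_part n M (cyclo_prod K) L1"
  proof (intro allI impI)
    fix K :: "nat multiset"
    assume "(\<forall>m\<in>#K. m \<ge> 1) \<and> cyclo_prod K dvd char_poly M \<and> cyclo_prod K dvd cyclo_prod J1"
    then have dv: "cyclo_prod K dvd cyclo_prod J1" by blast
    then obtain q where q: "cyclo_prod J1 = cyclo_prod K * q" by (auto elim: dvdE)
    have roots: "c^(2^a) \<noteq> 1" if "poly (of_int_poly (cyclo_prod K)) c = (0::complex)" for c
    proof
      assume c: "c^(2^a) = 1"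
      have "poly (of_int_poly (cyclo_prod J1) :: complex poly) c = 0"
        unfolding q using that by (simp add: of_int_poly_hom.hom_mult)
      then show False using notJ1[OF c] by simp
    qed
    show "lat_part n M (cyclo_prod K) (carrier_vec n) = lat_part n M (cyclo_prod K) L1"
    proof
      show "lat_part n M (cyclo_prod K) (carrier_vec n) \<subseteq> lat_part n M (cyclo_prod K) L1"
        unfolding lat_part_def using lat_part4[OF kr _ _ roots] by blast
      show "lat_part n M (cyclo_prod K) L1 \<subseteq> lat_part n M (cyclo_prod K) (carrier_vec n)"
        unfolding lat_part_def using L1_sub by blast
    qed
  qed
  have P5: "\<forall>K::nat multiset. (\<forall>m\<in>#K. m \<ge> 1) \<and> cyclo_prod K dvd char_poly M
            \<and> cyclo_prod J2 dvd cyclo_prod K \<longrightarrow>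
              lat_index (lat_part n M (cyclo_prod K) (carrier_vec n))
                        (lat_part n M (cyclo_prod K) L1) = 2"
  proof (intro allI impI)
    fix K :: "nat multiset"
    assume "(\<forall>m\<in>#K. m \<ge> 1) \<and> cyclo_prod K dvd char_poly M \<and> cyclo_prod J2 dvd cyclo_prod K"
    then have dv: "cyclo_prod J2 dvd cyclo_prod K" by blast
    then obtain q where q: "cyclo_prod K = cyclo_prod J2 * q" by (auto elim: dvdE)
    let ?P = "of_int_poly (cyclo_prod K) :: complex poly"
    define Lp where "Lp = lat_part n M (cyclo_prod K) (carrier_vec n)"
    define Hp where "Hp = lat_part n M (cyclo_prod K) L1"
    have Lp: "Lp = {v \<in> carrier_vec n. map_vec of_int v \<in> eig_sum n ?Mc ?P}"
      unfolding Lp_def lat_part_def by simp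
    have Hp: "Hp = {v \<in> L1. map_vec of_int v \<in> eig_sum n ?Mc ?P}"
      unfolding Hp_def lat_part_def by simp
    have yL: "y \<in> Lp"
    proof -
      have "\<forall>u\<in>set vs. u \<in> carrier_vec n \<and> (\<exists>c. poly ?P c = 0 \<and> ?Mc *\<^sub>v u = c \<cdot>\<^sub>v u)"
      proof
        fix u assume u: "u \<in> set vs"
        obtain l where l: "poly (of_int_poly (cyclo_prod J2) :: complex poly) l = 0" "?Mc *\<^sub>v u = l \<cdot>\<^sub>v u"
          using rootJ2[OF u] by blast
        have "poly ?P l = 0" unfolding q using l(1) by (simp add: of_int_poly_hom.hom_mult)
        then show "u \<in> carrier_vec n \<and> (\<exists>c. poly ?P c = 0 \<and> ?Mc *\<^sub>v u = c \<cdot>\<^sub>v u)"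
          using l(2) y(4) u by blast
      qed
      then have "map_vec of_int y \<in> eig_sum n ?Mc ?P" unfolding eig_sum_def using y(3) by blast
      then show ?thesis unfolding Lp using y(1) by blast
    qed
    interpret HH: subgrp n Hp
    proof
      show "Hp \<subseteq> carrier_vec n" unfolding Hp using L1_sub by blast
      show "0\<^sub>v n \<in> Hp" unfolding Hp using L1_zero eig_sum_zero by (metis (no_types, lifting) mem_Collect_eq of_int_hom.vec_hom_zero)
      fix a b assume a: "a \<in> Hp" and b: "b \<in> Hp"
      have ac: "a \<in> carrier_vec n" "b \<in> carrier_vec n" using a b L1_sub unfolding Hp by auto
      show "a + b \<in> Hp" using a b L1_add eig_sum_add vec_of_int_add[OF ac] unfolding Hp by auto
    next
      fix a assume a: "a \<in> Hp"
      show "- a \<in> Hp" using a L1_neg eig_sum_neg[OF Mc_carr] vec_of_int_neg unfolding Hp by auto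
    qed
    have minus: "x - z \<in> Lp" if "x \<in> Lp" "z \<in> Lp" for x z
    proof -
      have c: "x \<in> carrier_vec n" "z \<in> carrier_vec n" using that unfolding Lp by auto
      have "map_vec (of_int :: int \<Rightarrow> complex) (x - z) = map_vec of_int x + - map_vec of_int z"
        using c by (auto intro!: eq_vecI)
      moreover have "map_vec of_int x + - map_vec of_int z \<in> eig_sum n ?Mc ?P"
        using that eig_sum_add eig_sum_neg[OF Mc_carr] unfolding Lp by auto
      ultimately show ?thesis using c unfolding Lp by auto
    qed
    have yH: "y \<notin> Hp" using y(2) unfolding Hp by blast
    have yc: "y \<in> carrier_vec n" using y(1) .
    have S: "{cst Hp x | x. x \<in> Lp} = {Hp, cst Hp y}"
    proof
      show "{cst Hp x | x. x \<in> Lp} \<subseteq> {Hp, cst Hp y}"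
      proof
        fix C assume "C \<in> {cst Hp x | x. x \<in> Lp}"
        then obtain x where x: "x \<in> Lp" "C = cst Hp x" by blast
        have xc: "x \<in> carrier_vec n" using x(1) unfolding Lp by auto
        show "C \<in> {Hp, cst Hp y}"
        proof (cases "x \<in> L1")
          case True
          then have "x \<in> Hp" using x(1) unfolding Lp Hp by auto
          then show ?thesis using x(2) HH.cst_self by simp
        next
          case False
          have "x - y \<in> L1" using out_out[OF xc False yc y(2)] .
          moreover have "x - y \<in> Lp" using minus[OF x(1) yL] .
          ultimately have "x - y \<in> Hp" unfolding Lp Hp by auto
          then have "cst Hp x = cst Hp y" using HH.cst_eq[OF xc yc] by simp
          then show ?thesis using x(2) by simp
        qed
      qed
      show "{Hp, cst Hp y} \<subseteq> {cst Hp x | x. x \<in> Lp}"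
      proof -
        have "0\<^sub>v n \<in> Lp" using HH.zero unfolding Lp Hp using L1_sub by auto
        then have "cst Hp (0\<^sub>v n) \<in> {cst Hp x | x. x \<in> Lp}" by blast
        then have "Hp \<in> {cst Hp x | x. x \<in> Lp}" using HH.cst_zero by simp
        moreover have "cst Hp y \<in> {cst Hp x | x. x \<in> Lp}" using yL by blast
        ultimately show ?thesis by blast
      qed
    qed
    have ne: "Hp \<noteq> cst Hp y" using HH.cst_mem[OF yc] yH by auto
    show "lat_index (lat_part n M (cyclo_prod K) (carrier_vec n)) (lat_part n M (cyclo_prod K) L1) = 2"
      unfolding Lp_def[symmetric] Hp_def[symmetric] lat_index_cst S using ne by simp
  qed
  show ?thesis using PA J2ne J2one P4 P5 by blast
qed


end
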